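(* Under the standing assumptions of the context, with $p_1,\dots,p_n$ pairwise distinct, for each $i$ the performance function $\mathcal H(p_1,\dots,p_n)=\int_Q\min_{(a,b)\in C} f(\|q-p_a\|,\|q-p_b\|)\phi(q)\,dq$ is differentiable in $p_i$ and $$\frac{\partial \mathcal H}{\partial p_i}=\sum_{\mathcal T_{ij}\in\mathcal P_i}\int_{V_{\mathcal T_{ij}}}\frac{\partial}{\partial p_i} f(\|q-p_i\|,\|q-p_j\|)\,\phi(q)\,dq,$$ i.e. the contributions arising from the dependence of the cell boundaries on $p_i$ vanish.
   Context: $Q\subset\mathbb{R}^2$ is a compact convex polygon, $\phi:Q\to[0,\infty)$ is a $C^2$ density, and $f:[0,\infty)^2\to\mathbb{R}$ is $C^2$ with $\partial f/\partial x\ge0$, $\partial f/\partial y\ge0$, $f(x,y)=f(y,x)$. $C=\{(i,j):1\le i<j\le n\}$, $n\ge3$. For $i<j$, $\mathcal T_{ij}=\{p_i,p_j\}$ (written also $\mathcal T_{ji}$), with order-2 Voronoi cell $V_{\mathcal T_{ij}}=\{q\in Q:\|q-p_v\|\le\|q-p_w\|\ \forall v\in\{i,j\},\ w\notin\{i,j\}\}$. $\mathcal P_i$ is the set of all $\mathcal T_{ij}$, $j\ne i$, containing $p_i$. *)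

theory Defs
  imports "HOL-Analysis.Analysis"
begin

definition C2_on :: "'a::euclidean_space set \<Rightarrow> ('a \<Rightarrow> real) \<Rightarrow> bool" where
  "C2_on S g \<longleftrightarrow>
     (\<exists>(D1 :: 'a \<Rightarrow> 'a \<Rightarrow>\<^sub>L real) (D2 :: 'a \<Rightarrow> 'a \<Rightarrow>\<^sub>L ('a \<Rightarrow>\<^sub>L real)).
        (\<forall>x\<in>S. (g has_derivative blinfun_apply (D1 x)) (at x within S) \<and>
                 (D1 has_derivative blinfun_apply (D2 x)) (at x within S)) \<and>
        continuous_on S D2)"

definition pairs :: "nat \<Rightarrow> (nat \<times> nat) set" where
  "pairs n = {(i, j). 1 \<le> i \<and> i < j \<and> j \<le> n}"

definition cell2 :: "nat \<Rightarrow> (real^2) set \<Rightarrow> (nat \<Rightarrow> real^2) \<Rightarrow> nat \<Rightarrow> nat \<Rightarrow> (real^2) set" where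
  "cell2 n Q p i j = {q \<in> Q. \<forall>v\<in>{i, j}. \<forall>w\<in>{1..n} - {i, j}. norm (q - p v) \<le> norm (q - p w)}"

definition perf :: "nat \<Rightarrow> (real^2) set \<Rightarrow> (real \<Rightarrow> real \<Rightarrow> real) \<Rightarrow> (real^2 \<Rightarrow> real)
                    \<Rightarrow> (nat \<Rightarrow> real^2) \<Rightarrow> real" where
  "perf n Q f \<phi> p = integral Q (\<lambda>q.
      Min ((\<lambda>(a, b). f (norm (q - p a)) (norm (q - p b))) ` pairs n) * \<phi> q)"

end

theory Submission
  imports Defs
begin


lemma f_deriv_x:
  fixes f :: "real \<Rightarrow> real \<Rightarrow> real"
  assumes f_C2: "C2_on ({0..} \<times> {0..}) (\<lambda>z. f (fst z) (snd z))"
  shows "\<exists>D. \<forall>t\<ge>0. \<forall>y\<ge>0. ((\<lambda>s. f s y) has_real_derivative D t y) (at t within {0..})"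
proof -
  obtain D1 :: "real\<times>real \<Rightarrow> (real\<times>real) \<Rightarrow>\<^sub>L real" where
    D1: "\<forall>z\<in>{0..} \<times> {0..}. ((\<lambda>z. f (fst z) (snd z)) has_derivative blinfun_apply (D1 z)) (at z within {0..} \<times> {0..})"
    using f_C2 unfolding C2_on_def by blast
  have "((\<lambda>s. f s y) has_real_derivative D1 (t,y) (1,0)) (at t within {0..})" if "t\<ge>0" "y\<ge>0" for t y :: real
  proof -
    have 1: "((\<lambda>s. (s,y)) has_derivative (\<lambda>s. (s,0))) (at t within {0..})"
      by (rule has_derivative_Pair[OF has_derivative_ident has_derivative_const])
    have 2: "((\<lambda>z. f (fst z) (snd z)) has_derivative blinfun_apply (D1 (t,y))) (at ((\<lambda>s. (s,y)) t) within (\<lambda>s. (s,y)) ` {0..})"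
    proof -
      have sub: "(\<lambda>s. (s,y)) ` {0..} \<subseteq> {0..}\<times>{0..}" using that by auto
      have "((\<lambda>z. f (fst z) (snd z)) has_derivative blinfun_apply (D1 (t,y))) (at (t,y) within {0..} \<times> {0..})"
        using D1 that by simp
      then show ?thesis by (simp only: has_derivative_subset[OF _ sub])
    qed
    have 3: "((\<lambda>s. f s y) has_derivative (\<lambda>s. D1 (t,y) (s,0))) (at t within {0..})"
      using diff_chain_within[OF 1 2] by (simp add: o_def)
    show ?thesis
    proof (rule has_derivative_imp_has_field_derivative[OF 3])
      fix x :: real
      have "D1 (t, y) (x, 0) = D1 (t, y) (x *\<^sub>R (1,0))" by simp
      also have "\<dots> = x * D1 (t, y) (1, 0)" by (simp only: blinfun.scaleR_right real_scaleR_def)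
      finally show "x * D1 (t, y) (1, 0) = D1 (t, y) (x, 0)" by simp
    qed
  qed
  then show ?thesis by (intro exI[where x="\<lambda>t y. D1 (t,y) (1,0)"]) auto
qed

lemma f_mono:
  fixes f :: "real \<Rightarrow> real \<Rightarrow> real"
  assumes f_C2: "C2_on ({0..} \<times> {0..}) (\<lambda>z. f (fst z) (snd z))"
    and f_mono_x: "\<forall>x\<ge>0. \<forall>y\<ge>0. \<forall>d. ((\<lambda>t. f t y) has_real_derivative d) (at x within {0..}) \<longrightarrow> d \<ge> 0"
    and "0 \<le> x" "x \<le> x'" "0 \<le> y"
  shows "f x y \<le> f x' y"
proof -
  from f_deriv_x[OF f_C2] obtain D where D: "\<forall>t\<ge>0. \<forall>y\<ge>0. ((\<lambda>s. f s y) has_real_derivative D t y) (at t within {0..})" ..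
  show ?thesis
  proof (rule DERIV_nonneg_imp_increasing_open[OF assms(4)])
    fix t assume t: "x < t" "t < x'"
    then have "t \<in> interior {0::real..}" using assms(3) by simp
    then have atw: "at t within {0..} = at t" by (rule at_within_interior)
    show "\<exists>d. ((\<lambda>s. f s y) has_real_derivative d) (at t) \<and> 0 \<le> d"
    proof (intro exI conjI)
      have t0: "t \<ge> 0" using t assms(3) by simp
      have dd: "((\<lambda>s. f s y) has_real_derivative D t y) (at t within {0..})"
        using D t0 assms(5) by blast
      then show "((\<lambda>s. f s y) has_real_derivative D t y) (at t)"
        using atw by simp
      show "0 \<le> D t y" using f_mono_x t0 assms(5) dd by blast
    qed
  next
    have "continuous_on {0..} (\<lambda>s. f s y)"
    proof (rule has_derivative_continuous_on)
      fix s :: real assume "s \<in> {0..}"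
      then have "((\<lambda>s. f s y) has_real_derivative D s y) (at s within {0..})"
        using D assms(5) by simp
      then show "((\<lambda>s. f s y) has_derivative (*) (D s y)) (at s within {0..})"
        by (simp add: has_field_derivative_def)
    qed
    then show "continuous_on {x..x'} (\<lambda>s. f s y)"
      by (rule continuous_on_subset) (use assms(3) in auto)
  qed
qed

lemma f_mono2:
  fixes f :: "real \<Rightarrow> real \<Rightarrow> real"
  assumes mono: "\<And>x x' y. 0\<le>x \<Longrightarrow> x\<le>x' \<Longrightarrow> 0\<le>y \<Longrightarrow> f x y \<le> f x' y"
    and sym: "\<And>x y. 0\<le>x \<Longrightarrow> 0\<le>y \<Longrightarrow> f x y = f y x"
    and "0 \<le> x" "x \<le> x'" "0 \<le> y" "y \<le> y'"
  shows "f x y \<le> f x' y'"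
proof -
  have "f x y \<le> f x' y" by (rule mono) (use assms in auto)
  also have "\<dots> = f y x'" by (rule sym) (use assms in auto)
  also have "\<dots> \<le> f y' x'" by (rule mono) (use assms in auto)
  also have "\<dots> = f x' y'" by (rule sym) (use assms in auto)
  finally show ?thesis .
qed

lemma finite_pairs: "finite (pairs n)"
proof -
  have "pairs n \<subseteq> {1..n} \<times> {1..n}" by (auto simp: pairs_def)
  then show ?thesis by (rule finite_subset) simp
qed

lemma min_pairs:
  fixes f :: "real \<Rightarrow> real \<Rightarrow> real" and e :: "nat \<Rightarrow> real"
  assumes mono: "\<And>x x' y. 0\<le>x \<Longrightarrow> x\<le>x' \<Longrightarrow> 0\<le>y \<Longrightarrow> f x y \<le> f x' y"
    and sym: "\<And>x y. 0\<le>x \<Longrightarrow> 0\<le>y \<Longrightarrow> f x y = f y x"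
    and e0: "\<And>a. e a \<ge> 0"
    and u: "u \<in> {1..n}" and v: "v \<in> {1..n}" and uv: "u \<noteq> v"
    and le: "\<And>w. w\<in>{1..n} \<Longrightarrow> w \<noteq> u \<Longrightarrow> w \<noteq> v \<Longrightarrow> e u \<le> e w \<and> e v \<le> e w"
  shows "Min ((\<lambda>(a,b). f (e a) (e b)) ` pairs n) = f (e u) (e v)"
proof (rule Min_eqI)
  show "finite ((\<lambda>(a,b). f (e a) (e b)) ` pairs n)" using finite_pairs by simp
next
  have key: "f (e u) (e v) \<le> f (e a) (e b)" if a: "a \<in> {1..n}" and b: "b \<in> {1..n}" and ab: "a \<noteq> b" for a b
  proof -
    define s where "s = min (e u) (e v)"
    define t where "t = max (e u) (e v)"
    have fs: "f (e u) (e v) = f s t"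
      unfolding s_def t_def using sym[OF e0[of u] e0[of v]] by (cases "e u \<le> e v") (simp_all add: min_def max_def)
    have fab: "f (e a) (e b) = f (min (e a) (e b)) (max (e a) (e b))"
      using sym[OF e0[of a] e0[of b]] by (cases "e a \<le> e b") (simp_all add: min_def max_def)
    have sw: "s \<le> e w" if "w \<in> {1..n}" for w
      using le[OF that] unfolding s_def by (cases "w = u \<or> w = v") auto
    have s1: "s \<le> min (e a) (e b)" using sw a b by simp
    have t1: "t \<le> max (e a) (e b)"
    proof (cases "a \<noteq> u \<and> a \<noteq> v")
      case True then show ?thesis using le[OF a] unfolding t_def by auto
    next
      case False
      show ?thesis
      proof (cases "b \<noteq> u \<and> b \<noteq> v")
        case True then show ?thesis using le[OF b] unfolding t_def by auto
      next
        case False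
        with \<open>\<not> (a \<noteq> u \<and> a \<noteq> v)\<close> ab have "(a = u \<and> b = v) \<or> (a = v \<and> b = u)" by blast
        then show ?thesis unfolding t_def by auto
      qed
    qed
    have "f s t \<le> f (min (e a) (e b)) (max (e a) (e b))"
      by (rule f_mono2[OF mono sym]) (use s1 t1 e0[of u] e0[of v] e0[of a] e0[of b] in \<open>auto simp: s_def t_def\<close>)
    then show ?thesis using fs fab by simp
  qed
  fix y assume "y \<in> (\<lambda>(a,b). f (e a) (e b)) ` pairs n"
  then obtain a b where "(a,b) \<in> pairs n" "y = f (e a) (e b)" by auto
  then show "f (e u) (e v) \<le> y" using key[of a b] by (auto simp: pairs_def)
next
  have "(min u v, max u v) \<in> pairs n" using u v uv by (auto simp: pairs_def min_def max_def)
  moreover have "f (e (min u v)) (e (max u v)) = f (e u) (e v)"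
    using sym[OF e0[of u] e0[of v]] by (cases "u \<le> v") (simp_all add: min_def max_def)
  ultimately show "f (e u) (e v) \<in> (\<lambda>(a,b). f (e a) (e b)) ` pairs n"
    by (intro image_eqI[where x="(min u v, max u v)"]) simp_all
qed

lemma min_diff:
  fixes F G :: "'a \<Rightarrow> real"
  assumes "finite I" "I \<noteq> {}" "\<And>k. k \<in> I \<Longrightarrow> \<bar>F k - G k\<bar> \<le> c"
  shows "\<bar>Min (F ` I) - Min (G ` I)\<bar> \<le> c"
proof -
  have "Min (F ` I) \<in> F ` I" using assms(1,2) by (intro Min_in) auto
  then obtain k1 where k1: "k1 \<in> I" "Min (F ` I) = F k1" by blast
  have "Min (G ` I) \<in> G ` I" using assms(1,2) by (intro Min_in) auto
  then obtain k2 where k2: "k2 \<in> I" "Min (G ` I) = G k2" by blast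
  have "Min (F ` I) \<le> F k2" using assms(1) k2(1) by (intro Min_le) auto
  moreover have "Min (G ` I) \<le> G k1" using assms(1) k1(1) by (intro Min_le) auto
  moreover have "\<bar>F k1 - G k1\<bar> \<le> c" "\<bar>F k2 - G k2\<bar> \<le> c" using assms(3)[OF k1(1)] assms(3)[OF k2(1)] by auto
  ultimately show ?thesis unfolding k1(2) k2(2) abs_le_iff by linarith
qed

lemma deriv_lip_bound:
  fixes F :: "'a::real_normed_vector \<Rightarrow> real"
  assumes der: "(F has_derivative F') (at p)" and r: "r > 0"
    and lip: "\<And>y. norm (y - p) \<le> r \<Longrightarrow> \<bar>F y - F p\<bar> \<le> L * norm (y - p)"
  shows "\<bar>F' h\<bar> \<le> L * norm h"
proof (rule ccontr)
  assume neg: "\<not> \<bar>F' h\<bar> \<le> L * norm h"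
  have bl: "bounded_linear F'" using der by (rule has_derivative_bounded_linear)
  have h0: "h \<noteq> 0"
  proof
    assume "h = 0"
    then have "F' h = 0" using bl by (simp add: linear_simps)
    then show False using neg \<open>h = 0\<close> by simp
  qed
  then have nh: "norm h > 0" by simp
  define e where "e = (\<bar>F' h\<bar> - L * norm h) / (2 * norm h)"
  have e0: "e > 0" using neg nh unfolding e_def by (simp add: field_simps)
  obtain d where d: "d > 0" and dd: "\<And>x'. 0 < norm (x' - p) \<Longrightarrow> norm (x' - p) < d \<Longrightarrow>
      norm (F x' - F p - F' (x' - p)) / norm (x' - p) < e"
    using der e0 unfolding has_derivative_at' by blast
  define t where "t = min (d/2) r / norm h"
  have t0: "t > 0" using d r nh unfolding t_def by simp
  have th: "t * norm h = min (d/2) r" using nh unfolding t_def by simp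
  define x' where "x' = p + t *\<^sub>R h"
  have nx: "norm (x' - p) = t * norm h" unfolding x'_def using t0 by simp
  have F't: "F' (x' - p) = t * F' h"
    unfolding x'_def using bl by (simp add: linear_simps)
  have q: "norm (F x' - F p - F' (x' - p)) / norm (x' - p) < e"
    using dd[of x'] nx th d r by simp
  then have q2: "\<bar>F x' - F p - t * F' h\<bar> < e * (t * norm h)"
    using nx th d r t0 nh F't by (simp add: divide_less_eq mult_pos_pos)
  have l2: "\<bar>F x' - F p\<bar> \<le> L * (t * norm h)"
    using lip[of x'] nx th by simp
  have "t * \<bar>F' h\<bar> \<le> \<bar>F x' - F p\<bar> + \<bar>F x' - F p - t * F' h\<bar>"
    using t0 by (simp add: abs_mult) 
  also have "\<dots> < L * (t * norm h) + e * (t * norm h)" using q2 l2 by simp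
  finally have "t * \<bar>F' h\<bar> < t * (L * norm h + e * norm h)"
    by (simp add: algebra_simps)
  then have "\<bar>F' h\<bar> < L * norm h + e * norm h"
    using t0 by simp
  moreover have "2 * (e * norm h) = \<bar>F' h\<bar> - L * norm h" using nh unfolding e_def by simp
  ultimately show False using neg by linarith
qed


lemma f_lip:
  fixes f :: "real \<Rightarrow> real \<Rightarrow> real"
  assumes f_C2: "C2_on ({0..} \<times> {0..}) (\<lambda>z. f (fst z) (snd z))"
  shows "\<exists>K\<ge>0. \<forall>a b a' b'. a \<in> {0..R} \<longrightarrow> b \<in> {0..R} \<longrightarrow> a' \<in> {0..R} \<longrightarrow> b' \<in> {0..R} \<longrightarrow>
           \<bar>f a b - f a' b'\<bar> \<le> K * (\<bar>a - a'\<bar> + \<bar>b - b'\<bar>)"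
proof -
  define S :: "(real \<times> real) set" where "S = {0..} \<times> {0..}"
  define B :: "(real \<times> real) set" where "B = {0..R} \<times> {0..R}"
  obtain D1 :: "real\<times>real \<Rightarrow> (real\<times>real) \<Rightarrow>\<^sub>L real" and D2 :: "real\<times>real \<Rightarrow> (real\<times>real) \<Rightarrow>\<^sub>L ((real\<times>real) \<Rightarrow>\<^sub>L real)" where
    D: "\<forall>z\<in>S. ((\<lambda>z. f (fst z) (snd z)) has_derivative blinfun_apply (D1 z)) (at z within S) \<and>
          (D1 has_derivative blinfun_apply (D2 z)) (at z within S)"
    using f_C2 unfolding C2_on_def S_def by blast
  have BS: "B \<subseteq> S" unfolding B_def S_def by auto
  have "continuous_on S D1"
    by (rule has_derivative_continuous_on) (use D in blast)
  then have cB: "continuous_on B D1" using BS by (rule continuous_on_subset)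
  have "compact B" unfolding B_def by (intro compact_Times compact_Icc)
  then have "compact (D1 ` B)" by (rule compact_continuous_image[OF cB])
  then have "bounded (D1 ` B)" by (rule compact_imp_bounded)
  then obtain K0 where "\<forall>x\<in>D1 ` B. norm x \<le> K0" unfolding bounded_iff by blast
  then have K0: "\<And>z. z \<in> B \<Longrightarrow> norm (D1 z) \<le> K0" by blast
  define K where "K = max K0 0"
  have lipB: "norm (f (fst z) (snd z) - f (fst z') (snd z')) \<le> K * norm (z - z')" if "z \<in> B" "z' \<in> B" for z z'
  proof (rule differentiable_bound[where f="\<lambda>z. f (fst z) (snd z)" and f'="\<lambda>z. blinfun_apply (D1 z)"])
    show "convex B" unfolding B_def by (intro convex_Times convex_real_interval)
    show "((\<lambda>z. f (fst z) (snd z)) has_derivative blinfun_apply (D1 x)) (at x within B)" if "x \<in> B" for x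
    proof -
      have "x \<in> S" using that BS by blast
      then have "((\<lambda>z. f (fst z) (snd z)) has_derivative blinfun_apply (D1 x)) (at x within S)"
        using D by blast
      then show ?thesis by (rule has_derivative_subset[OF _ BS])
    qed
    show "onorm (blinfun_apply (D1 x)) \<le> K" if "x \<in> B" for x
      using K0[OF that] unfolding K_def by (simp add: norm_blinfun.rep_eq[symmetric])
  qed (use that in auto)
  show ?thesis
  proof (intro exI[of _ K] conjI allI impI)
    show "K \<ge> 0" unfolding K_def by simp
    fix a b a' b' :: real
    assume "a \<in> {0..R}" "b \<in> {0..R}" "a' \<in> {0..R}" "b' \<in> {0..R}"
    then have "(a,b) \<in> B" "(a',b') \<in> B" unfolding B_def by auto
    from lipB[OF this] have "\<bar>f a b - f a' b'\<bar> \<le> K * norm ((a - a', b - b'))" by simp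
    also have "\<dots> \<le> K * (\<bar>a - a'\<bar> + \<bar>b - b'\<bar>)"
      using norm_Pair_le[of "a - a'" "b - b'"] unfolding K_def by (intro mult_left_mono) auto
    finally show "\<bar>f a b - f a' b'\<bar> \<le> K * (\<bar>a - a'\<bar> + \<bar>b - b'\<bar>)" .
  qed
qed


lemma continuous_on_Min_image:
  fixes F :: "'k \<Rightarrow> 'a::topological_space \<Rightarrow> real"
  assumes "finite I" "I \<noteq> {}" "\<And>k. k \<in> I \<Longrightarrow> continuous_on S (F k)"
  shows "continuous_on S (\<lambda>x. Min ((\<lambda>k. F k x) ` I))"
  using assms
proof (induction I rule: finite_ne_induct)
  case (singleton k) then show ?case by simp
next
  case (insert a I)
  have eq: "(\<lambda>x. Min ((\<lambda>k. F k x) ` insert a I)) = (\<lambda>x. min (F a x) (Min ((\<lambda>k. F k x) ` I)))"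
    using insert.hyps by (simp add: Min_insert)
  show ?case unfolding eq using insert by (intro continuous_on_min) auto
qed



definition gmin :: "nat \<Rightarrow> (real \<Rightarrow> real \<Rightarrow> real) \<Rightarrow> (nat \<Rightarrow> real^2) \<Rightarrow> real^2 \<Rightarrow> real" where
  "gmin n f p q = Min ((\<lambda>(a, b). f (norm (q - p a)) (norm (q - p b))) ` pairs n)"

definition badset :: "nat \<Rightarrow> (nat \<Rightarrow> real^2) \<Rightarrow> (real^2) set" where
  "badset n p = p ` {1..n} \<union> (\<Union>a\<in>{1..n}. \<Union>b\<in>{1..n}-{a}. {q. norm (q - p a) = norm (q - p b)})"

lemma bisector_eq:
  fixes a b :: "real^2"
  shows "{q. norm (q - a) = norm (q - b)} = {q. (2 *\<^sub>R (b - a)) \<bullet> q = b \<bullet> b - a \<bullet> a}"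
proof -
  have "norm (q - a) = norm (q - b) \<longleftrightarrow> (2 *\<^sub>R (b - a)) \<bullet> q = b \<bullet> b - a \<bullet> a" for q
    unfolding norm_eq by (simp add: inner_diff_left inner_diff_right inner_commute algebra_simps)
  then show ?thesis by blast
qed

lemma negligible_badset:
  assumes "inj_on p {1..n}"
  shows "negligible (badset n p)"
  unfolding badset_def
proof (rule negligible_Un)
  show "negligible (p ` {1..n})" by (rule negligible_finite) simp
  show "negligible (\<Union>a\<in>{1..n}. \<Union>b\<in>{1..n}-{a}. {q. norm (q - p a) = norm (q - p b)})"
  proof (intro negligible_Union finite_imageI finite_atLeastAtMost ballI)
    fix T assume "T \<in> (\<lambda>a. \<Union>b\<in>{1..n}-{a}. {q. norm (q - p a) = norm (q - p b)}) ` {1..n}"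
    then obtain a where a: "a \<in> {1..n}" and T: "T = (\<Union>b\<in>{1..n}-{a}. {q. norm (q - p a) = norm (q - p b)})" by blast
    show "negligible T" unfolding T
    proof (intro negligible_Union finite_imageI finite_Diff finite_atLeastAtMost ballI)
      fix U assume "U \<in> (\<lambda>b. {q. norm (q - p a) = norm (q - p b)}) ` ({1..n} - {a})"
      then obtain b where b: "b \<in> {1..n}" "b \<noteq> a" and U: "U = {q. norm (q - p a) = norm (q - p b)}" by blast
      have "p a \<noteq> p b" using assms a b inj_on_def by metis
      then have "2 *\<^sub>R (p b - p a) \<noteq> 0" by simp
      then show "negligible U" unfolding U bisector_eq by (intro negligible_hyperplane) simp
    qed
  qed
qed

lemma norm_tri1: "norm (q - x) \<le> norm (q - y) + norm (x - y)" for q x y :: "real^2"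
  using norm_triangle_ineq[of "q - y" "y - x"] by (simp add: norm_minus_commute)

lemma norm_tri2: "norm (q - y) \<le> norm (q - x) + norm (x - y)" for q x y :: "real^2"
  using norm_triangle_ineq[of "q - x" "x - y"] by simp

lemma local_form:
  fixes f :: "real \<Rightarrow> real \<Rightarrow> real" and p :: "nat \<Rightarrow> real^2"
  assumes mono: "\<And>x x' y. 0\<le>x \<Longrightarrow> x\<le>x' \<Longrightarrow> 0\<le>y \<Longrightarrow> f x y \<le> f x' y"
    and sym: "\<And>x y. 0\<le>x \<Longrightarrow> 0\<le>y \<Longrightarrow> f x y = f y x"
    and inj: "inj_on p {1..n}" and n3: "n \<ge> 3" and i: "i \<in> {1..n}"
    and qQ: "q \<in> Q" and qN: "q \<notin> badset n p"
  shows "(\<exists>j\<in>{1..n}-{i}. q \<in> cell2 n Q p i j \<and> (\<forall>k\<in>{1..n}-{i}. k \<noteq> j \<longrightarrow> q \<notin> cell2 n Q p i k) \<and>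
            (\<exists>\<delta>>0. \<forall>x. norm (x - p i) < \<delta> \<longrightarrow> gmin n f (p(i:=x)) q = f (norm (q - x)) (norm (q - p j))))
       \<or> ((\<forall>k\<in>{1..n}-{i}. q \<notin> cell2 n Q p i k) \<and>
            (\<exists>\<delta>>0. \<forall>x. norm (x - p i) < \<delta> \<longrightarrow> gmin n f (p(i:=x)) q = gmin n f p q))"
proof -
  define d where "d a = norm (q - p a)" for a
  have dist: "d a \<noteq> d b" if "a \<in> {1..n}" "b \<in> {1..n}" "a \<noteq> b" for a b
    using qN that unfolding badset_def d_def by blast
  define Ot where "Ot = {1..n} - {i}"
  have finO: "finite Ot" unfolding Ot_def by simp
  have cardO: "card Ot \<ge> 2" unfolding Ot_def using i n3 by (simp add: card_Diff_singleton)
  then have "Ot \<noteq> {}" by auto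
  have "Min (d ` Ot) \<in> d ` Ot" using finO \<open>Ot \<noteq> {}\<close> by (intro Min_in) auto
  then obtain m1 where m1: "m1 \<in> Ot" "Min (d ` Ot) = d m1" by blast
  have m1le: "d m1 \<le> d w" if "w \<in> Ot" for w
  proof -
    have "Min (d ` Ot) \<le> d w" using finO that by (intro Min_le) auto
    then show ?thesis using m1(2) by simp
  qed
  define Ot2 where "Ot2 = Ot - {m1}"
  have finO2: "finite Ot2" unfolding Ot2_def using finO by simp
  have "card Ot2 \<ge> 1" unfolding Ot2_def using cardO m1(1) finO by (simp add: card_Diff_singleton)
  then have "Ot2 \<noteq> {}" by auto
  have "Min (d ` Ot2) \<in> d ` Ot2" using finO2 \<open>Ot2 \<noteq> {}\<close> by (intro Min_in) auto
  then obtain m2 where m2: "m2 \<in> Ot2" "Min (d ` Ot2) = d m2" by blast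
  have m2le: "d m2 \<le> d w" if "w \<in> Ot2" for w
  proof -
    have "Min (d ` Ot2) \<le> d w" using finO2 that by (intro Min_le) auto
    then show ?thesis using m2(2) by simp
  qed
  have m1n: "m1 \<in> {1..n}" "m1 \<noteq> i" using m1(1) unfolding Ot_def by auto
  have m2n: "m2 \<in> {1..n}" "m2 \<noteq> i" "m2 \<noteq> m1" using m2(1) unfolding Ot2_def Ot_def by auto
  have m1lt: "d m1 < d w" if "w \<in> Ot" "w \<noteq> m1" for w
    using m1le[OF that(1)] dist[of m1 w] m1n that unfolding Ot_def by force
  have m12: "d m1 \<le> d m2" using m1le m2(1) unfolding Ot2_def by blast
  have d0: "d a \<ge> 0" for a unfolding d_def by simp
  have gm: "gmin n f (p(i:=x)) q = f (norm (q - (p(i:=x)) u)) (norm (q - (p(i:=x)) v))"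
    if "u \<in> {1..n}" "v \<in> {1..n}" "u \<noteq> v"
       "\<And>w. w \<in> {1..n} \<Longrightarrow> w \<noteq> u \<Longrightarrow> w \<noteq> v \<Longrightarrow>
          norm (q - (p(i:=x)) u) \<le> norm (q - (p(i:=x)) w) \<and> norm (q - (p(i:=x)) v) \<le> norm (q - (p(i:=x)) w)"
    for x u v
    unfolding gmin_def
    by (rule min_pairs[where e="\<lambda>a. norm (q - (p(i:=x)) a)", OF mono sym]) (use that in auto)
  show ?thesis
  proof (cases "d i < d m2")
    case True
    have cell: "q \<in> cell2 n Q p i m1"
      unfolding cell2_def
    proof (intro CollectI conjI ballI qQ)
      fix v w assume v: "v \<in> {i, m1}" and w: "w \<in> {1..n} - {i, m1}"
      then have "w \<in> Ot2" unfolding Ot2_def Ot_def by auto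
      then have "d m2 \<le> d w" by (rule m2le)
      moreover have "d m1 \<le> d w" using m1le \<open>w \<in> Ot2\<close> unfolding Ot2_def by blast
      ultimately show "norm (q - p v) \<le> norm (q - p w)" using v True unfolding d_def by auto
    qed
    have notcell: "q \<notin> cell2 n Q p i k" if "k \<in> {1..n}-{i}" "k \<noteq> m1" for k
    proof
      assume "q \<in> cell2 n Q p i k"
      moreover have "m1 \<in> {1..n} - {i, k}" using m1n that by auto
      ultimately have "d k \<le> d m1" unfolding cell2_def d_def by blast
      moreover have "d m1 < d k" using m1lt[of k] that unfolding Ot_def by auto
      ultimately show False by simp
    qed
    define \<delta> where "\<delta> = d m2 - d i"
    have "\<delta> > 0" using True unfolding \<delta>_def by simp
    have loc: "gmin n f (p(i:=x)) q = f (norm (q - x)) (norm (q - p m1))" if x: "norm (x - p i) < \<delta>" for x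
    proof -
      have "gmin n f (p(i:=x)) q = f (norm (q - (p(i:=x)) i)) (norm (q - (p(i:=x)) m1))"
      proof (rule gm[OF i m1n(1) m1n(2)[symmetric]])
        fix w assume w: "w \<in> {1..n}" "w \<noteq> i" "w \<noteq> m1"
        then have "w \<in> Ot2" unfolding Ot2_def Ot_def by auto
        then have "d m2 \<le> d w" by (rule m2le)
        moreover have "d m1 \<le> d w" using m1le \<open>w \<in> Ot2\<close> unfolding Ot2_def by blast
        moreover have "norm (q - x) \<le> d i + norm (x - p i)" unfolding d_def by (rule norm_tri1)
        ultimately show "norm (q - (p(i:=x)) i) \<le> norm (q - (p(i:=x)) w) \<and> norm (q - (p(i:=x)) m1) \<le> norm (q - (p(i:=x)) w)"
          using w m1n x unfolding \<delta>_def d_def by auto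
      qed
      then show ?thesis using m1n by simp
    qed
    have A: "q \<in> cell2 n Q p i m1 \<and> (\<forall>k\<in>{1..n}-{i}. k \<noteq> m1 \<longrightarrow> q \<notin> cell2 n Q p i k) \<and>
            (\<exists>\<delta>>0. \<forall>x. norm (x - p i) < \<delta> \<longrightarrow> gmin n f (p(i:=x)) q = f (norm (q - x)) (norm (q - p m1)))"
      using cell notcell loc \<open>\<delta> > 0\<close> by blast
    have "m1 \<in> {1..n}-{i}" using m1n by simp
    with A show ?thesis by blast
  next
    case False
    then have lt: "d m2 < d i" using dist[of m2 i] m2n i by force
    have notcell: "q \<notin> cell2 n Q p i k" if k: "k \<in> {1..n}-{i}" for k
    proof
      assume c: "q \<in> cell2 n Q p i k"
      obtain w where w: "w \<in> {m1, m2}" "w \<noteq> k" using m2n by blast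
      then have "w \<in> {1..n} - {i, k}" using m1n m2n by auto
      then have "d i \<le> d w" using c unfolding cell2_def d_def by blast
      moreover have "d w \<le> d m2" using w m12 by auto
      ultimately show False using lt by simp
    qed
    define \<delta> where "\<delta> = d i - d m2"
    have "\<delta> > 0" using lt unfolding \<delta>_def by simp
    have loc: "gmin n f (p(i:=x)) q = f (d m1) (d m2)" if x: "norm (x - p i) < \<delta>" for x
    proof -
      have "gmin n f (p(i:=x)) q = f (norm (q - (p(i:=x)) m1)) (norm (q - (p(i:=x)) m2))"
      proof (rule gm[OF m1n(1) m2n(1) m2n(3)[symmetric]])
        fix w assume w: "w \<in> {1..n}" "w \<noteq> m1" "w \<noteq> m2"
        show "norm (q - (p(i:=x)) m1) \<le> norm (q - (p(i:=x)) w) \<and> norm (q - (p(i:=x)) m2) \<le> norm (q - (p(i:=x)) w)"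
        proof (cases "w = i")
          case True
          have "d i \<le> norm (q - x) + norm (x - p i)" unfolding d_def by (rule norm_tri2)
          then show ?thesis using True x m1n m2n m12 unfolding \<delta>_def d_def by auto
        next
          case False
          then have "w \<in> Ot2" using w unfolding Ot2_def Ot_def by auto
          then have "d m2 \<le> d w" by (rule m2le)
          moreover have "d m1 \<le> d w" using m1le \<open>w \<in> Ot2\<close> unfolding Ot2_def by blast
          ultimately show ?thesis using False m1n m2n unfolding d_def by auto
        qed
      qed
      then show ?thesis using m1n m2n unfolding d_def by simp
    qed
    have "gmin n f p q = f (d m1) (d m2)" using loc[of "p i"] \<open>\<delta> > 0\<close> by simp
    then have loc2: "\<forall>x. norm (x - p i) < \<delta> \<longrightarrow> gmin n f (p(i:=x)) q = gmin n f p q" using loc by simp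
    have "\<forall>k\<in>{1..n}-{i}. q \<notin> cell2 n Q p i k" using notcell by blast
    moreover have "\<exists>\<delta>>0. \<forall>x. norm (x - p i) < \<delta> \<longrightarrow> gmin n f (p(i:=x)) q = gmin n f p q"
      using loc2 \<open>\<delta> > 0\<close> by blast
    ultimately show ?thesis by (intro disjI2 conjI)
  qed
qed

definition Mf :: "nat \<Rightarrow> (real^2) set \<Rightarrow> (real \<Rightarrow> real \<Rightarrow> real) \<Rightarrow> (real^2 \<Rightarrow> real) \<Rightarrow> (nat \<Rightarrow> real^2) \<Rightarrow> nat \<Rightarrow> real^2 \<Rightarrow> real^2 \<Rightarrow> real" where
  "Mf n Q f \<phi> p i q h = (\<Sum>j\<in>{1..n} - {i}. if q \<in> cell2 n Q p i j then
      frechet_derivative (\<lambda>x. f (norm (q - x)) (norm (q - p j))) (at (p i)) h * \<phi> q else 0)"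

lemma f_diff_at:
  fixes f :: "real \<Rightarrow> real \<Rightarrow> real"
  assumes f_C2: "C2_on ({0..} \<times> {0..}) (\<lambda>z. f (fst z) (snd z))" and "a > 0" "c > 0"
  shows "(\<lambda>z. f (fst z) (snd z)) differentiable (at (a, c))"
proof -
  obtain D1 :: "real\<times>real \<Rightarrow> (real\<times>real) \<Rightarrow>\<^sub>L real" where
    D1: "\<forall>z\<in>{0..} \<times> {0..}. ((\<lambda>z. f (fst z) (snd z)) has_derivative blinfun_apply (D1 z)) (at z within {0..} \<times> {0..})"
    using f_C2 unfolding C2_on_def by blast
  have "(a, c) \<in> interior ({0..} \<times> {0..})" using assms(2,3) by (simp add: interior_Times)
  then have at: "at (a, c) within {0..} \<times> {0..} = at (a, c)" by (rule at_within_interior)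
  have "((\<lambda>z. f (fst z) (snd z)) has_derivative blinfun_apply (D1 (a,c))) (at (a,c) within {0..} \<times> {0..})"
    using D1 assms(2,3) by simp
  then show ?thesis unfolding at by (rule differentiableI)
qed

lemma dist_f_diff:
  fixes f :: "real \<Rightarrow> real \<Rightarrow> real" and q y :: "real^2"
  assumes f_C2: "C2_on ({0..} \<times> {0..}) (\<lambda>z. f (fst z) (snd z))" and "q \<noteq> y" "c > 0"
  shows "(\<lambda>x. f (norm (q - x)) c) differentiable (at y)"
proof -
  have "(\<lambda>x. q - x) differentiable (at y)" by simp
  moreover have "norm differentiable (at (q - y))" using assms(2) by simp
  ultimately have "(\<lambda>x. norm (q - x)) differentiable (at y)"
    using differentiable_compose[of norm "\<lambda>x. q - x" y UNIV] by simp
  then have G: "(\<lambda>x. (norm (q - x), c)) differentiable (at y)" by simp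
  have "(\<lambda>z. f (fst z) (snd z)) differentiable (at (norm (q - y), c))"
    using f_diff_at[OF f_C2] assms(2,3) by simp
  from differentiable_compose[OF this G] show ?thesis by simp
qed

lemma pointwise_deriv:
  fixes f :: "real \<Rightarrow> real \<Rightarrow> real" and p :: "nat \<Rightarrow> real^2"
  assumes f_C2: "C2_on ({0..} \<times> {0..}) (\<lambda>z. f (fst z) (snd z))"
    and fmono: "\<And>x x' y. 0\<le>x \<Longrightarrow> x\<le>x' \<Longrightarrow> 0\<le>y \<Longrightarrow> f x y \<le> f x' y"
    and fsym: "\<And>x y. 0\<le>x \<Longrightarrow> 0\<le>y \<Longrightarrow> f x y = f y x"
    and inj: "inj_on p {1..n}" and n3: "n \<ge> 3" and i: "i \<in> {1..n}"
    and qQ: "q \<in> Q" and qN: "q \<notin> badset n p"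
  shows "((\<lambda>x. gmin n f (p(i:=x)) q * \<phi> q) has_derivative Mf n Q f \<phi> p i q) (at (p i))"
proof -
  have qp: "q \<noteq> p a" if "a \<in> {1..n}" for a using qN that unfolding badset_def by blast
  have LF: "(\<exists>j\<in>{1..n}-{i}. q \<in> cell2 n Q p i j \<and> (\<forall>k\<in>{1..n}-{i}. k \<noteq> j \<longrightarrow> q \<notin> cell2 n Q p i k) \<and>
            (\<exists>\<delta>>0. \<forall>x. norm (x - p i) < \<delta> \<longrightarrow> gmin n f (p(i:=x)) q = f (norm (q - x)) (norm (q - p j))))
       \<or> ((\<forall>k\<in>{1..n}-{i}. q \<notin> cell2 n Q p i k) \<and>
            (\<exists>\<delta>>0. \<forall>x. norm (x - p i) < \<delta> \<longrightarrow> gmin n f (p(i:=x)) q = gmin n f p q))"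
    by (rule local_form[where f=f]) (fact fmono fsym inj n3 i qQ qN)+
  from LF show ?thesis
  proof (elim disjE conjE bexE exE)
    fix j \<delta> assume j: "j \<in> {1..n} - {i}" and cj: "q \<in> cell2 n Q p i j"
      and nc: "\<forall>k\<in>{1..n}-{i}. k \<noteq> j \<longrightarrow> q \<notin> cell2 n Q p i k"
      and d: "\<delta> > 0" and loc: "\<forall>x. norm (x - p i) < \<delta> \<longrightarrow> gmin n f (p(i:=x)) q = f (norm (q - x)) (norm (q - p j))"
    define Fd where "Fd = frechet_derivative (\<lambda>x. f (norm (q - x)) (norm (q - p j))) (at (p i))"
    have "norm (q - p j) > 0" using qp[of j] j by simp
    then have "(\<lambda>x. f (norm (q - x)) (norm (q - p j))) differentiable (at (p i))"
      using dist_f_diff[OF f_C2] qp[OF i] by blast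
    then have "((\<lambda>x. f (norm (q - x)) (norm (q - p j))) has_derivative Fd) (at (p i))"
      unfolding Fd_def frechet_derivative_works .
    then have D: "((\<lambda>x. f (norm (q - x)) (norm (q - p j)) * \<phi> q) has_derivative (\<lambda>h. Fd h * \<phi> q)) (at (p i))"
      by (rule has_derivative_mult_left)
    have D2: "((\<lambda>x. gmin n f (p(i:=x)) q * \<phi> q) has_derivative (\<lambda>h. Fd h * \<phi> q)) (at (p i))"
    proof (rule has_derivative_transform_within_open[OF D open_ball])
      show "p i \<in> ball (p i) \<delta>" using d by simp
      fix x assume "x \<in> ball (p i) \<delta>"
      then have "norm (x - p i) < \<delta>" by (simp add: dist_norm norm_minus_commute)
      then show "f (norm (q - x)) (norm (q - p j)) * \<phi> q = gmin n f (p(i:=x)) q * \<phi> q" using loc by simp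
    qed
    have "Mf n Q f \<phi> p i q h = Fd h * \<phi> q" for h
    proof -
      have "Mf n Q f \<phi> p i q h = (if q \<in> cell2 n Q p i j then Fd h * \<phi> q else 0) +
          (\<Sum>k\<in>{1..n} - {i} - {j}. if q \<in> cell2 n Q p i k then
              frechet_derivative (\<lambda>x. f (norm (q - x)) (norm (q - p k))) (at (p i)) h * \<phi> q else 0)"
        unfolding Mf_def Fd_def using j by (subst sum.remove[of _ j]) auto
      also have "(\<Sum>k\<in>{1..n} - {i} - {j}. if q \<in> cell2 n Q p i k then
              frechet_derivative (\<lambda>x. f (norm (q - x)) (norm (q - p k))) (at (p i)) h * \<phi> q else 0) = 0"
        using nc by (intro sum.neutral) auto
      finally show ?thesis using cj by simp
    qed
    then have "Mf n Q f \<phi> p i q = (\<lambda>h. Fd h * \<phi> q)" by (rule ext)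
    then show ?thesis using D2 by simp
  next
    fix \<delta> assume nc: "\<forall>k\<in>{1..n}-{i}. q \<notin> cell2 n Q p i k"
      and d: "\<delta> > 0" and loc: "\<forall>x. norm (x - p i) < \<delta> \<longrightarrow> gmin n f (p(i:=x)) q = gmin n f p q"
    have D: "((\<lambda>x. gmin n f p q * \<phi> q) has_derivative (\<lambda>h. 0)) (at (p i))" by (rule has_derivative_const)
    have D2: "((\<lambda>x. gmin n f (p(i:=x)) q * \<phi> q) has_derivative (\<lambda>h. 0)) (at (p i))"
    proof (rule has_derivative_transform_within_open[OF D open_ball])
      show "p i \<in> ball (p i) \<delta>" using d by simp
      fix x assume "x \<in> ball (p i) \<delta>"
      then have "norm (x - p i) < \<delta>" by (simp add: dist_norm norm_minus_commute)
      then show "gmin n f p q * \<phi> q = gmin n f (p(i:=x)) q * \<phi> q" using loc by simp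
    qed
    have "Mf n Q f \<phi> p i q = (\<lambda>h. 0)"
      unfolding Mf_def using nc by (intro ext sum.neutral) auto
    then show ?thesis using D2 by simp
  qed
qed

lemma cint: fixes f :: "'a::euclidean_space \<Rightarrow> real" assumes "compact S" "continuous_on S f" shows "f integrable_on S"
proof -
  have "(\<lambda>x. indicator S x *\<^sub>R f x) integrable_on UNIV"
    by (rule integrable_on_lborel[OF borel_integrable_compact[OF assms]])
  moreover have "(\<lambda>x. indicator S x *\<^sub>R f x) = (\<lambda>x. if x \<in> S then f x else 0)"
    by (auto simp: indicator_def)
  ultimately show ?thesis using integrable_restrict_Int[of S f UNIV] by simp
qed

lemma cell_compact:
  assumes "compact Q"
  shows "compact (cell2 n Q p i j)"
proof -
  have eq: "cell2 n Q p i j = Q \<inter> (\<Inter>v\<in>{i,j}. \<Inter>w\<in>{1..n}-{i,j}. {q. norm (q - p v) \<le> norm (q - p w)})"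
    unfolding cell2_def by blast
  have "closed (\<Inter>v\<in>{i,j}. \<Inter>w\<in>{1..n}-{i,j}. {q. norm (q - p v) \<le> norm (q - p w)})"
    by (intro closed_INT ballI closed_Collect_le continuous_intros)
  then show ?thesis unfolding eq using assms by (rule compact_Int_closed[rotated])
qed

lemma dir_deriv_seq:
  fixes F :: "'a::real_normed_vector \<Rightarrow> real"
  assumes der: "(F has_derivative F') (at p)"
  shows "(\<lambda>k. (F (p + (1 / real (Suc k)) *\<^sub>R h) - F p) * real (Suc k)) \<longlonglongrightarrow> F' h"
proof (cases "h = 0")
  case True
  have bl: "bounded_linear F'" using der by (rule has_derivative_bounded_linear)
  then have "F' h = 0" using True by (simp add: linear_simps)
  then show ?thesis using True by simp
next
  case False
  have bl: "bounded_linear F'" using der by (rule has_derivative_bounded_linear)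
  from der have lim: "((\<lambda>v. norm (F (p + v) - F p - F' v) / norm v) \<longlongrightarrow> 0) (at 0)"
    unfolding has_derivative_at by blast
  define Y where "Y k = (1 / real (Suc k)) *\<^sub>R h" for k
  have Y0: "Y \<longlonglongrightarrow> 0"
  proof -
    have "(\<lambda>k. inverse (real (Suc k))) \<longlonglongrightarrow> 0" by (rule LIMSEQ_inverse_real_of_nat)
    then have "(\<lambda>k. inverse (real (Suc k)) *\<^sub>R h) \<longlonglongrightarrow> 0 *\<^sub>R h" by (intro tendsto_scaleR tendsto_const)
    then show ?thesis unfolding Y_def by (simp add: divide_inverse)
  qed
  have Yn: "Y k \<in> UNIV - {0}" for k using False unfolding Y_def by simp
  from lim have L1: "((\<lambda>v. norm (F (p + v) - F p - F' v) / norm v) \<circ> Y) \<longlonglongrightarrow> 0"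
    unfolding tendsto_at_iff_sequentially using Yn Y0 by blast
  have E: "((\<lambda>v. norm (F (p + v) - F p - F' v) / norm v) \<circ> Y) k =
      \<bar>(F (p + (1 / real (Suc k)) *\<^sub>R h) - F p) * real (Suc k) - F' h\<bar> / norm h" for k
  proof -
    have "F' (Y k) = F' h / real (Suc k)" unfolding Y_def using bl by (simp add: linear_simps)
    moreover have "norm (Y k) = norm h / real (Suc k)" unfolding Y_def by simp
    ultimately have "((\<lambda>v. norm (F (p + v) - F p - F' v) / norm v) \<circ> Y) k =
       \<bar>F (p + Y k) - F p - F' h / real (Suc k)\<bar> / (norm h / real (Suc k))" by simp
    also have "\<dots> = \<bar>(F (p + Y k) - F p) * real (Suc k) - F' h\<bar> / norm h"
    proof -
      have "\<bar>F (p + Y k) - F p - F' h / real (Suc k)\<bar> = \<bar>(F (p + Y k) - F p) * real (Suc k) - F' h\<bar> / real (Suc k)"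
        by (simp add: field_simps abs_divide)
      then show ?thesis by simp
    qed
    finally show ?thesis unfolding Y_def .
  qed
  have E2: "((\<lambda>v. norm (F (p + v) - F p - F' v) / norm v) \<circ> Y) =
      (\<lambda>k. \<bar>(F (p + (1 / real (Suc k)) *\<^sub>R h) - F p) * real (Suc k) - F' h\<bar> / norm h)"
    by (rule ext) (rule E)
  from L1 have "(\<lambda>k. \<bar>(F (p + (1 / real (Suc k)) *\<^sub>R h) - F p) * real (Suc k) - F' h\<bar> / norm h) \<longlonglongrightarrow> 0"
    unfolding E2 .
  then have "(\<lambda>k. \<bar>(F (p + (1 / real (Suc k)) *\<^sub>R h) - F p) * real (Suc k) - F' h\<bar> / norm h * norm h) \<longlonglongrightarrow> 0 * norm h"
    by (intro tendsto_mult tendsto_const)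
  then have "(\<lambda>k. \<bar>(F (p + (1 / real (Suc k)) *\<^sub>R h) - F p) * real (Suc k) - F' h\<bar>) \<longlonglongrightarrow> 0"
    using False by simp
  then have "(\<lambda>k. (F (p + (1 / real (Suc k)) *\<^sub>R h) - F p) * real (Suc k) - F' h) \<longlonglongrightarrow> 0"
    by (simp add: tendsto_rabs_zero_iff)
  then show ?thesis by (simp add: LIM_zero_iff)
qed

lemma f_cont:
  fixes f :: "real \<Rightarrow> real \<Rightarrow> real"
  assumes f_C2: "C2_on ({0..} \<times> {0..}) (\<lambda>z. f (fst z) (snd z))"
  shows "continuous_on ({0..} \<times> {0..}) (\<lambda>z. f (fst z) (snd z))"
proof -
  obtain D1 :: "real\<times>real \<Rightarrow> (real\<times>real) \<Rightarrow>\<^sub>L real" where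
    D1: "\<forall>z\<in>{0..} \<times> {0..}. ((\<lambda>z. f (fst z) (snd z)) has_derivative blinfun_apply (D1 z)) (at z within {0..} \<times> {0..})"
    using f_C2 unfolding C2_on_def by blast
  show ?thesis by (rule has_derivative_continuous_on[where f'="\<lambda>z. blinfun_apply (D1 z)"]) (use D1 in blast)
qed

lemma pairs_ne: "n \<ge> 2 \<Longrightarrow> pairs n \<noteq> {}"
  unfolding pairs_def by (intro ex_in_conv[THEN iffD1] exI[of _ "(1,2)"]) auto

lemma gmin_cont:
  fixes f :: "real \<Rightarrow> real \<Rightarrow> real"
  assumes f_C2: "C2_on ({0..} \<times> {0..}) (\<lambda>z. f (fst z) (snd z))" and n2: "n \<ge> 2"
  shows "continuous_on S (\<lambda>q. gmin n f P q)"
proof -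
  have fc: "continuous_on ({0..} \<times> {0..}) (\<lambda>z. f (fst z) (snd z))" by (rule f_cont[OF f_C2])
  have "continuous_on S (\<lambda>q. Min ((\<lambda>k. (case k of (a,b) \<Rightarrow> f (norm (q - P a)) (norm (q - P b)))) ` pairs n))"
  proof (rule continuous_on_Min_image[OF finite_pairs pairs_ne[OF n2]])
    fix k assume "k \<in> pairs n"
    obtain a b where k: "k = (a,b)" by (cases k)
    have "continuous_on S (\<lambda>q. (\<lambda>z. f (fst z) (snd z)) ((\<lambda>q. (norm (q - P a), norm (q - P b))) q))"
      by (rule continuous_on_compose2[OF fc]) (auto intro!: continuous_intros)
    then show "continuous_on S (\<lambda>q. case k of (a,b) \<Rightarrow> f (norm (q - P a)) (norm (q - P b)))"
      unfolding k by simp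
  qed
  then show ?thesis unfolding gmin_def by (simp add: case_prod_beta')
qed

lemma gmin_lip:
  fixes f :: "real \<Rightarrow> real \<Rightarrow> real" and p :: "nat \<Rightarrow> real^2"
  assumes f_C2: "C2_on ({0..} \<times> {0..}) (\<lambda>z. f (fst z) (snd z))" and n2: "n \<ge> 2"
    and bQ: "bounded Q"
  shows "\<exists>K\<ge>0. \<forall>q\<in>Q. \<forall>x y. norm x \<le> R0 \<longrightarrow> norm y \<le> R0 \<longrightarrow>
           \<bar>gmin n f (p(i:=x)) q - gmin n f (p(i:=y)) q\<bar> \<le> K * norm (x - y)"
proof -
  obtain RQ where RQ: "\<forall>q\<in>Q. norm q \<le> RQ" using bQ unfolding bounded_iff by blast
  define Rp where "Rp = (\<Sum>a\<in>{1..n}. norm (p a))"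
  define R where "R = \<bar>RQ\<bar> + Rp + \<bar>R0\<bar>"
  have Rp0: "Rp \<ge> 0" unfolding Rp_def by (intro sum_nonneg) simp
  have pa: "norm (p a) \<le> Rp" if "a \<in> {1..n}" for a
    unfolding Rp_def using that by (intro member_le_sum) auto
  obtain Kf where Kf: "Kf \<ge> 0" and lipf: "\<forall>a b a' b'. a \<in> {0..R} \<longrightarrow> b \<in> {0..R} \<longrightarrow> a' \<in> {0..R} \<longrightarrow> b' \<in> {0..R} \<longrightarrow>
           \<bar>f a b - f a' b'\<bar> \<le> Kf * (\<bar>a - a'\<bar> + \<bar>b - b'\<bar>)"
    using f_lip[OF f_C2, of R] by blast
  show ?thesis
  proof (intro exI[of _ "2 * Kf"] conjI ballI allI impI)
    show "2 * Kf \<ge> 0" using Kf by simp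
    fix q x y :: "real^2" assume q: "q \<in> Q" and x: "norm x \<le> R0" and y: "norm y \<le> R0"
    have ea: "norm (q - (p(i:=z)) a) \<in> {0..R}" if "a \<in> {1..n}" "norm z \<le> R0" for a z
    proof -
      have "norm (q - (p(i:=z)) a) \<le> norm q + norm ((p(i:=z)) a)" by (rule norm_triangle_ineq4)
      moreover have "norm q \<le> \<bar>RQ\<bar>" using RQ q by force
      moreover have "norm ((p(i:=z)) a) \<le> Rp + \<bar>R0\<bar>" using pa[OF that(1)] that(2) Rp0 by auto
      ultimately show ?thesis unfolding R_def by simp
    qed
    have ed: "\<bar>norm (q - (p(i:=x)) a) - norm (q - (p(i:=y)) a)\<bar> \<le> norm (x - y)" for a
    proof (cases "a = i")
      case True
      have "\<bar>norm (q - x) - norm (q - y)\<bar> \<le> norm ((q - x) - (q - y))" by (rule norm_triangle_ineq3)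
      also have "\<dots> = norm (x - y)" by (simp add: norm_minus_commute)
      finally show ?thesis using True by simp
    next
      case False then show ?thesis by simp
    qed
    define Fx where "Fx k = (case k of (a,b) \<Rightarrow> f (norm (q - (p(i:=x)) a)) (norm (q - (p(i:=x)) b)))" for k
    define Fy where "Fy k = (case k of (a,b) \<Rightarrow> f (norm (q - (p(i:=y)) a)) (norm (q - (p(i:=y)) b)))" for k
    have "\<bar>Min (Fx ` pairs n) - Min (Fy ` pairs n)\<bar> \<le> 2 * Kf * norm (x - y)"
    proof (rule min_diff[OF finite_pairs pairs_ne[OF n2]])
      fix k assume k: "k \<in> pairs n"
      obtain a b where kab: "k = (a,b)" by (cases k)
      have ab: "a \<in> {1..n}" "b \<in> {1..n}" using k unfolding kab pairs_def by auto
      have "\<bar>Fx k - Fy k\<bar> \<le> Kf * (\<bar>norm (q - (p(i:=x)) a) - norm (q - (p(i:=y)) a)\<bar> + \<bar>norm (q - (p(i:=x)) b) - norm (q - (p(i:=y)) b)\<bar>)"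
        unfolding Fx_def Fy_def kab using lipf ea[OF ab(1) x] ea[OF ab(2) x] ea[OF ab(1) y] ea[OF ab(2) y] by simp
      also have "\<dots> \<le> Kf * (norm (x - y) + norm (x - y))"
        using ed[of a] ed[of b] Kf by (intro mult_left_mono) auto
      finally show "\<bar>Fx k - Fy k\<bar> \<le> 2 * Kf * norm (x - y)" by simp
    qed
    moreover have "gmin n f (p(i:=x)) q = Min (Fx ` pairs n)" "gmin n f (p(i:=y)) q = Min (Fy ` pairs n)"
      unfolding gmin_def Fx_def Fy_def by (simp_all add: case_prod_beta')
    ultimately show "\<bar>gmin n f (p(i:=x)) q - gmin n f (p(i:=y)) q\<bar> \<le> 2 * Kf * norm (x - y)" by simp
  qed
qed

lemma Mf_cell:
  fixes f :: "real \<Rightarrow> real \<Rightarrow> real" and p :: "nat \<Rightarrow> real^2"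
  assumes fmono: "\<And>x x' y. 0\<le>x \<Longrightarrow> x\<le>x' \<Longrightarrow> 0\<le>y \<Longrightarrow> f x y \<le> f x' y"
    and fsym: "\<And>x y. 0\<le>x \<Longrightarrow> 0\<le>y \<Longrightarrow> f x y = f y x"
    and inj: "inj_on p {1..n}" and n3: "n \<ge> 3" and i: "i \<in> {1..n}"
    and qQ: "q \<in> Q" and qN: "q \<notin> badset n p"
    and j: "j \<in> {1..n} - {i}" and cj: "q \<in> cell2 n Q p i j"
  shows "Mf n Q f \<phi> p i q h = frechet_derivative (\<lambda>x. f (norm (q - x)) (norm (q - p j))) (at (p i)) h * \<phi> q"
proof -
  have LF: "(\<exists>j\<in>{1..n}-{i}. q \<in> cell2 n Q p i j \<and> (\<forall>k\<in>{1..n}-{i}. k \<noteq> j \<longrightarrow> q \<notin> cell2 n Q p i k) \<and>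
            (\<exists>\<delta>>0. \<forall>x. norm (x - p i) < \<delta> \<longrightarrow> gmin n f (p(i:=x)) q = f (norm (q - x)) (norm (q - p j))))
       \<or> ((\<forall>k\<in>{1..n}-{i}. q \<notin> cell2 n Q p i k) \<and>
            (\<exists>\<delta>>0. \<forall>x. norm (x - p i) < \<delta> \<longrightarrow> gmin n f (p(i:=x)) q = gmin n f p q))"
    by (rule local_form[where f=f]) (fact fmono fsym inj n3 i qQ qN)+
  have nc: "\<forall>k\<in>{1..n}-{i}. k \<noteq> j \<longrightarrow> q \<notin> cell2 n Q p i k"
  proof -
    from LF show ?thesis
    proof (elim disjE)
      assume "\<exists>j\<in>{1..n}-{i}. q \<in> cell2 n Q p i j \<and> (\<forall>k\<in>{1..n}-{i}. k \<noteq> j \<longrightarrow> q \<notin> cell2 n Q p i k) \<and>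
            (\<exists>\<delta>>0. \<forall>x. norm (x - p i) < \<delta> \<longrightarrow> gmin n f (p(i:=x)) q = f (norm (q - x)) (norm (q - p j)))"
      then obtain j' where j': "j' \<in> {1..n}-{i}" "\<forall>k\<in>{1..n}-{i}. k \<noteq> j' \<longrightarrow> q \<notin> cell2 n Q p i k" by blast
      have "j = j'" using j'(2) j cj by blast
      then show ?thesis using j' by simp
    next
      assume "(\<forall>k\<in>{1..n}-{i}. q \<notin> cell2 n Q p i k) \<and>
            (\<exists>\<delta>>0. \<forall>x. norm (x - p i) < \<delta> \<longrightarrow> gmin n f (p(i:=x)) q = gmin n f p q)"
      then show ?thesis using j cj by blast
    qed
  qed
  have "Mf n Q f \<phi> p i q h = (if q \<in> cell2 n Q p i j then frechet_derivative (\<lambda>x. f (norm (q - x)) (norm (q - p j))) (at (p i)) h * \<phi> q else 0) +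
      (\<Sum>k\<in>{1..n} - {i} - {j}. if q \<in> cell2 n Q p i k then
          frechet_derivative (\<lambda>x. f (norm (q - x)) (norm (q - p k))) (at (p i)) h * \<phi> q else 0)"
    unfolding Mf_def using j by (subst sum.remove[of _ j]) auto
  also have "(\<Sum>k\<in>{1..n} - {i} - {j}. if q \<in> cell2 n Q p i k then
          frechet_derivative (\<lambda>x. f (norm (q - x)) (norm (q - p k))) (at (p i)) h * \<phi> q else 0) = 0"
    using nc by (intro sum.neutral) auto
  finally show ?thesis using cj by simp
qed



theorem mainTheorem3:
  fixes Q :: "(real^2) set" and \<phi> :: "real^2 \<Rightarrow> real"
    and f :: "real \<Rightarrow> real \<Rightarrow> real" and p :: "nat \<Rightarrow> real^2" and n i :: nat
  assumes Q_polygon: "polytope Q" "interior Q \<noteq> {}"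
    and phi_nonneg: "\<forall>q\<in>Q. \<phi> q \<ge> 0"
    and phi_C2: "C2_on Q \<phi>"
    and f_C2: "C2_on ({0..} \<times> {0..}) (\<lambda>z. f (fst z) (snd z))"
    and f_mono_x: "\<forall>x\<ge>0. \<forall>y\<ge>0. \<forall>d. ((\<lambda>t. f t y) has_real_derivative d) (at x within {0..}) \<longrightarrow> d \<ge> 0"
    and f_mono_y: "\<forall>x\<ge>0. \<forall>y\<ge>0. \<forall>d. ((\<lambda>t. f x t) has_real_derivative d) (at y within {0..}) \<longrightarrow> d \<ge> 0"
    and f_sym: "\<forall>x\<ge>0. \<forall>y\<ge>0. f x y = f y x"
    and n3: "n \<ge> 3"
    and distinct: "inj_on p {1..n}"
    and i: "i \<in> {1..n}"
  shows "((\<lambda>x. perf n Q f \<phi> (p(i := x))) has_derivative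
           (\<lambda>h. \<Sum>j\<in>{1..n} - {i}.
                  integral (cell2 n Q p i j)
                    (\<lambda>q. frechet_derivative (\<lambda>x. f (norm (q - x)) (norm (q - p j))) (at (p i)) h
                         * \<phi> q)))
         (at (p i))"
proof -
  have fmono: "\<And>x x' y. 0\<le>x \<Longrightarrow> x\<le>x' \<Longrightarrow> 0\<le>y \<Longrightarrow> f x y \<le> f x' y"
    by (rule f_mono[OF f_C2 f_mono_x])
  have fsym: "\<And>x y. 0\<le>x \<Longrightarrow> 0\<le>y \<Longrightarrow> f x y = f y x" using f_sym by blast
  have n2: "n \<ge> 2" using n3 by simp
  have cQ: "compact Q" using Q_polygon(1) by (rule polytope_imp_compact)
  have bQ: "bounded Q" using cQ by (rule compact_imp_bounded)
  have mQ: "Q \<in> lmeasurable" using cQ by (rule lmeasurable_compact)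
  define N where "N = badset n p"
  have negN: "negligible N" unfolding N_def by (rule negligible_badset[OF distinct])
  have spike: "negligible ((Q - N - Q) \<union> (Q - (Q - N)))"
    by (rule negligible_subset[OF negN]) auto
  have phic: "continuous_on Q \<phi>"
  proof -
    obtain D1 :: "(real^2) \<Rightarrow> (real^2) \<Rightarrow>\<^sub>L real" where
      D1: "\<forall>x\<in>Q. (\<phi> has_derivative blinfun_apply (D1 x)) (at x within Q)"
      using phi_C2 unfolding C2_on_def by blast
    show ?thesis by (rule has_derivative_continuous_on[where f'="\<lambda>z. blinfun_apply (D1 z)"]) (use D1 in blast)
  qed
  obtain \<Phi> where Phi: "\<Phi> \<ge> 0" "\<And>q. q \<in> Q \<Longrightarrow> \<bar>\<phi> q\<bar> \<le> \<Phi>"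
  proof -
    have "bounded (\<phi> ` Q)" by (rule compact_imp_bounded[OF compact_continuous_image[OF phic cQ]])
    then obtain B where "\<forall>x\<in>\<phi> ` Q. norm x \<le> B" unfolding bounded_iff by blast
    then have "\<And>q. q \<in> Q \<Longrightarrow> \<bar>\<phi> q\<bar> \<le> max B 0" by fastforce
    then show ?thesis using that[of "max B 0"] by simp
  qed
  define G where "G x q = gmin n f (p(i:=x)) q * \<phi> q" for x q
  have perfG: "perf n Q f \<phi> (p(i:=x)) = integral Q (G x)" for x
    unfolding perf_def G_def gmin_def ..
  have Gcont: "continuous_on Q (G x)" for x
    unfolding G_def by (intro continuous_on_mult gmin_cont[OF f_C2 n2] phic)
  have Gint: "G x integrable_on Q" for x by (rule cint[OF cQ Gcont])
  have derq: "((\<lambda>x. G x q) has_derivative Mf n Q f \<phi> p i q) (at (p i))" if "q \<in> Q - N" for q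
    unfolding G_def
    apply (rule pointwise_deriv[where f=f])
    apply (fact f_C2)
    apply (fact fmono)
    apply (fact fsym)
    apply (fact distinct)
    apply (fact n3)
    apply (fact i)
    using that N_def apply blast
    using that N_def apply blast
    done
  have Glip: "\<exists>K\<ge>0. \<forall>q\<in>Q. \<forall>x y. norm x \<le> R0 \<longrightarrow> norm y \<le> R0 \<longrightarrow> \<bar>G x q - G y q\<bar> \<le> K * norm (x - y)" for R0
  proof -
    obtain K where K: "K \<ge> 0" "\<forall>q\<in>Q. \<forall>x y. norm x \<le> R0 \<longrightarrow> norm y \<le> R0 \<longrightarrow>
           \<bar>gmin n f (p(i:=x)) q - gmin n f (p(i:=y)) q\<bar> \<le> K * norm (x - y)"
      using gmin_lip[OF f_C2 n2 bQ, of R0 p i] by blast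
    show ?thesis
    proof (intro exI[of _ "K * \<Phi>"] conjI ballI allI impI)
      show "K * \<Phi> \<ge> 0" using K Phi by simp
      fix q x y assume q: "q \<in> Q" and x: "norm (x::real^2) \<le> R0" and y: "norm (y::real^2) \<le> R0"
      have "\<bar>G x q - G y q\<bar> = \<bar>gmin n f (p(i:=x)) q - gmin n f (p(i:=y)) q\<bar> * \<bar>\<phi> q\<bar>"
        unfolding G_def by (simp add: abs_mult[symmetric] left_diff_distrib)
      also have "\<dots> \<le> (K * norm (x - y)) * \<Phi>"
        using K q x y Phi(2)[OF q] by (intro mult_mono) auto
      finally show "\<bar>G x q - G y q\<bar> \<le> K * \<Phi> * norm (x - y)" by (simp add: algebra_simps)
    qed
  qed
  obtain KM where KM: "KM \<ge> 0" "\<And>q h. q \<in> Q - N \<Longrightarrow> \<bar>Mf n Q f \<phi> p i q h\<bar> \<le> KM * norm h"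
  proof -
    obtain K where K: "K \<ge> 0" "\<forall>q\<in>Q. \<forall>x y. norm x \<le> norm (p i) + 1 \<longrightarrow> norm y \<le> norm (p i) + 1 \<longrightarrow> \<bar>G x q - G y q\<bar> \<le> K * norm (x - y)"
      using Glip by blast
    have "\<bar>Mf n Q f \<phi> p i q h\<bar> \<le> K * norm h" if q: "q \<in> Q - N" for q h
    proof (rule deriv_lip_bound[OF derq[OF q], of 1])
      fix y :: "real^2" assume "norm (y - p i) \<le> 1"
      then have "norm y \<le> norm (p i) + 1" using norm_triangle_ineq2[of y "p i"] by simp
      then show "\<bar>G y q - G (p i) q\<bar> \<le> K * norm (y - p i)" using K q by simp
    qed simp
    then show ?thesis using that K(1) by blast
  qed
  define Fd where "Fd j q = frechet_derivative (\<lambda>x. f (norm (q - x)) (norm (q - p j))) (at (p i))" for j q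
  define tm where "tm j h q = (if q \<in> cell2 n Q p i j then Fd j q h * \<phi> q else 0)" for j h q
  have cellQ: "cell2 n Q p i j \<subseteq> Q" for j unfolding cell2_def by auto
  have constint: "(\<lambda>q. c) integrable_on (Q - N)" for c :: real
    using integrable_on_const[OF mQ] integrable_spike_set_eq[OF spike] by blast
  have termint: "tm j h integrable_on Q" if j: "j \<in> {1..n} - {i}" for j h
  proof -
    obtain K where K: "K\<ge>0" "\<forall>q\<in>Q. \<forall>x y. norm x \<le> norm (p i) + norm h \<longrightarrow> norm y \<le> norm (p i) + norm h \<longrightarrow> \<bar>G x q - G y q\<bar> \<le> K * norm (x - y)"
      using Glip by blast
    define C where "C = cell2 n Q p i j"
    define s where "s k q = (if q \<in> C then (G (p i + (1 / real (Suc k)) *\<^sub>R h) q - G (p i) q) * real (Suc k) else 0)" for k q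
    have sint: "s k integrable_on (Q - N)" for k
    proof -
      have "continuous_on Q (\<lambda>q. (G (p i + (1 / real (Suc k)) *\<^sub>R h) q - G (p i) q) * real (Suc k))"
        by (intro continuous_on_mult continuous_on_diff Gcont continuous_on_const)
      then have "continuous_on C (\<lambda>q. (G (p i + (1 / real (Suc k)) *\<^sub>R h) q - G (p i) q) * real (Suc k))"
        by (rule continuous_on_subset) (simp add: C_def cellQ)
      then have "(\<lambda>q. (G (p i + (1 / real (Suc k)) *\<^sub>R h) q - G (p i) q) * real (Suc k)) integrable_on C"
        by (rule cint[rotated]) (simp add: C_def cell_compact cQ)
      moreover have "C \<inter> Q = C" using cellQ[of j] unfolding C_def by blast
      ultimately have "(\<lambda>q. (G (p i + (1 / real (Suc k)) *\<^sub>R h) q - G (p i) q) * real (Suc k)) integrable_on C \<inter> Q"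
        by simp
      then have "s k integrable_on Q" unfolding s_def by (rule integrable_restrict_Int[THEN iffD2])
      then show ?thesis using integrable_spike_set_eq[OF spike] by blast
    qed
    have sle: "norm (s k q) \<le> K * norm h" if q: "q \<in> Q - N" for k q
    proof (cases "q \<in> C")
      case True
      define t where "t = 1 / real (Suc k)"
      have t: "0 < t" "t \<le> 1" unfolding t_def by auto
      have "norm (t *\<^sub>R h) \<le> norm h" using t by (simp add: mult_left_le_one_le)
      then have n1: "norm (p i + t *\<^sub>R h) \<le> norm (p i) + norm h"
        using norm_triangle_ineq[of "p i" "t *\<^sub>R h"] by simp
      have n2: "norm (p i) \<le> norm (p i) + norm h" by simp
      have "\<bar>G (p i + t *\<^sub>R h) q - G (p i) q\<bar> \<le> K * norm ((p i + t *\<^sub>R h) - p i)"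
        using K(2) q n1 n2 by blast
      also have "\<dots> = K * (t * norm h)" using t by simp
      finally have "\<bar>G (p i + t *\<^sub>R h) q - G (p i) q\<bar> * real (Suc k) \<le> K * (t * norm h) * real (Suc k)"
        by (intro mult_right_mono) auto
      also have "K * (t * norm h) * real (Suc k) = K * norm h" unfolding t_def by simp
      finally show ?thesis using True unfolding s_def t_def by (simp add: abs_mult)
    next
      case False
      then show ?thesis unfolding s_def using K(1) by simp
    qed
    have slim: "(\<lambda>k. s k q) \<longlonglongrightarrow> tm j h q" if q: "q \<in> Q - N" for q
    proof (cases "q \<in> C")
      case True
      have "(\<lambda>k. ((\<lambda>x. G x q) (p i + (1 / real (Suc k)) *\<^sub>R h) - (\<lambda>x. G x q) (p i)) * real (Suc k)) \<longlonglongrightarrow> Mf n Q f \<phi> p i q h"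
        by (rule dir_deriv_seq[OF derq[OF q]])
      moreover have "Mf n Q f \<phi> p i q h = Fd j q h * \<phi> q"
        unfolding Fd_def
        apply (rule Mf_cell[where f=f])
        apply (fact fmono)
        apply (fact fsym)
        apply (fact distinct)
        apply (fact n3)
        apply (fact i)
        using q apply blast
        using q N_def apply blast
        apply (fact j)
        using True C_def apply blast
        done
      ultimately show ?thesis using True unfolding s_def tm_def C_def by simp
    next
      case False then show ?thesis unfolding s_def tm_def C_def by simp
    qed
    have "tm j h integrable_on (Q - N)"
      by (rule dominated_convergence(1)[OF sint constint sle slim])
    then show ?thesis using integrable_spike_set_eq[OF spike] by blast
  qed
  have Mf_eq: "Mf n Q f \<phi> p i q h = (\<Sum>j\<in>{1..n}-{i}. tm j h q)" for q h
    unfolding Mf_def tm_def Fd_def ..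
  have Mint: "(\<lambda>q. Mf n Q f \<phi> p i q h) integrable_on Q" for h
    unfolding Mf_eq by (rule integrable_sum) (auto intro: termint)
  define T where "T = (\<lambda>h. \<Sum>j\<in>{1..n} - {i}.
                  integral (cell2 n Q p i j)
                    (\<lambda>q. frechet_derivative (\<lambda>x. f (norm (q - x)) (norm (q - p j))) (at (p i)) h
                         * \<phi> q))"
  have Teq: "T h = integral Q (\<lambda>q. Mf n Q f \<phi> p i q h)" for h
  proof -
    have "integral Q (\<lambda>q. Mf n Q f \<phi> p i q h) = (\<Sum>j\<in>{1..n}-{i}. integral Q (tm j h))"
      unfolding Mf_eq by (rule integral_sum) (auto intro: termint)
    also have "\<dots> = T h" unfolding T_def tm_def Fd_def
      by (intro sum.cong refl) (simp add: integral_restrict_Int Int_absorb2[OF cellQ])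
    finally show ?thesis by simp
  qed
  have Mlin: "linear (Mf n Q f \<phi> p i q)" if "q \<in> Q - N" for q
    using derq[OF that] by (rule has_derivative_linear)
  have linT: "linear T"
  proof (rule linearI)
    fix x y :: "real^2"
    have "integral Q (\<lambda>q. Mf n Q f \<phi> p i q (x + y)) = integral Q (\<lambda>q. Mf n Q f \<phi> p i q x + Mf n Q f \<phi> p i q y)"
      by (rule integral_spike[OF negN]) (simp add: linear_add[OF Mlin])
    also have "\<dots> = integral Q (\<lambda>q. Mf n Q f \<phi> p i q x) + integral Q (\<lambda>q. Mf n Q f \<phi> p i q y)"
      by (rule integral_add[OF Mint Mint])
    finally show "T (x + y) = T x + T y" unfolding Teq .
  next
    fix c :: real and x :: "real^2"
    have "integral Q (\<lambda>q. Mf n Q f \<phi> p i q (c *\<^sub>R x)) = integral Q (\<lambda>q. c * Mf n Q f \<phi> p i q x)"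
      by (rule integral_spike[OF negN]) (simp add: linear_scale[OF Mlin])
    also have "\<dots> = c * integral Q (\<lambda>q. Mf n Q f \<phi> p i q x)" by simp
    finally show "T (c *\<^sub>R x) = c *\<^sub>R T x" unfolding Teq by simp
  qed
  have blT: "bounded_linear T" using linT linear_conv_bounded_linear by blast
  have lim: "((\<lambda>h. norm (perf n Q f \<phi> (p(i := p i + h)) - perf n Q f \<phi> (p(i := p i)) - T h) / norm h) \<longlongrightarrow> 0) (at 0)"
    unfolding tendsto_at_iff_sequentially
  proof (intro allI impI)
    fix X :: "nat \<Rightarrow> real^2"
    assume Xn: "\<forall>k. X k \<in> UNIV - {0}" and X0: "X \<longlonglongrightarrow> 0"
    have "Bseq X" using X0 by (intro convergent_imp_Bseq convergentI)
    then obtain B where B: "B > 0" "\<forall>k. norm (X k) \<le> B" by (rule BseqE)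
    obtain K where K: "K\<ge>0" "\<forall>q\<in>Q. \<forall>x y. norm x \<le> norm (p i) + B \<longrightarrow> norm y \<le> norm (p i) + B \<longrightarrow> \<bar>G x q - G y q\<bar> \<le> K * norm (x - y)"
      using Glip by blast
    define r where "r k q = (G (p i + X k) q - G (p i) q - Mf n Q f \<phi> p i q (X k)) / norm (X k)" for k q
    have Xnz: "X k \<noteq> 0" for k using Xn by simp
    have rint: "r k integrable_on (Q - N)" for k
    proof -
      have "(\<lambda>q. inverse (norm (X k)) *\<^sub>R (G (p i + X k) q - G (p i) q - Mf n Q f \<phi> p i q (X k))) integrable_on Q"
        by (intro integrable_cmul integrable_diff Gint Mint)
      moreover have "r k = (\<lambda>q. inverse (norm (X k)) *\<^sub>R (G (p i + X k) q - G (p i) q - Mf n Q f \<phi> p i q (X k)))"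
        by (rule ext) (simp add: r_def divide_inverse mult.commute)
      ultimately have "r k integrable_on Q" by simp
      then show ?thesis using integrable_spike_set_eq[OF spike] by blast
    qed
    have rI: "integral Q (r k) = (perf n Q f \<phi> (p(i := p i + X k)) - perf n Q f \<phi> (p(i := p i)) - T (X k)) / norm (X k)" for k
    proof -
      have "integral Q (r k) = integral Q (\<lambda>q. G (p i + X k) q - G (p i) q - Mf n Q f \<phi> p i q (X k)) / norm (X k)"
        unfolding r_def by (rule integral_divide)
      also have "integral Q (\<lambda>q. G (p i + X k) q - G (p i) q - Mf n Q f \<phi> p i q (X k)) =
          integral Q (G (p i + X k)) - integral Q (G (p i)) - integral Q (\<lambda>q. Mf n Q f \<phi> p i q (X k))"
        by (simp add: integral_diff integrable_diff Gint Mint)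
      finally show ?thesis unfolding perfG Teq by simp
    qed
    have rle: "norm (r k q) \<le> K + KM" if q: "q \<in> Q - N" for k q
    proof -
      have n1: "norm (p i + X k) \<le> norm (p i) + B" using norm_triangle_ineq[of "p i" "X k"] B(2)[rule_format, of k] by simp
      have n2: "norm (p i) \<le> norm (p i) + B" using B by simp
      have "\<bar>G (p i + X k) q - G (p i) q\<bar> \<le> K * norm ((p i + X k) - p i)"
        using K(2) q n1 n2 by blast
      then have a1: "\<bar>G (p i + X k) q - G (p i) q\<bar> \<le> K * norm (X k)" by simp
      have a2: "\<bar>Mf n Q f \<phi> p i q (X k)\<bar> \<le> KM * norm (X k)" using KM(2)[OF q] .
      have "\<bar>G (p i + X k) q - G (p i) q - Mf n Q f \<phi> p i q (X k)\<bar> \<le> (K + KM) * norm (X k)"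
        using a1 a2 by (simp add: algebra_simps)
      moreover have "norm (X k) > 0" using Xnz by simp
      ultimately show ?thesis unfolding r_def by (simp add: abs_divide divide_le_eq)
    qed
    have rlim: "(\<lambda>k. r k q) \<longlonglongrightarrow> 0" if q: "q \<in> Q - N" for q
    proof -
      from derq[OF q] have "((\<lambda>v. norm (G (p i + v) q - G (p i) q - Mf n Q f \<phi> p i q v) / norm v) \<longlongrightarrow> 0) (at 0)"
        unfolding has_derivative_at by blast
      then have "((\<lambda>v. norm (G (p i + v) q - G (p i) q - Mf n Q f \<phi> p i q v) / norm v) \<circ> X) \<longlonglongrightarrow> 0"
        unfolding tendsto_at_iff_sequentially using Xn X0 by blast
      then have "(\<lambda>k. norm (r k q)) \<longlonglongrightarrow> 0" unfolding r_def o_def by (simp add: abs_divide)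
      then show ?thesis by (rule tendsto_norm_zero_cancel)
    qed
    have "(\<lambda>k. integral (Q - N) (r k)) \<longlonglongrightarrow> integral (Q - N) (\<lambda>q. 0)"
      by (rule dominated_convergence(2)[OF rint constint rle rlim])
    moreover have "integral (Q - N) (r k) = integral Q (r k)" for k
      by (rule integral_spike_set) (rule negligible_subset[OF negN], blast)+
    ultimately have "(\<lambda>k. integral Q (r k)) \<longlonglongrightarrow> 0" by simp
    then have L: "(\<lambda>k. \<bar>integral Q (r k)\<bar>) \<longlonglongrightarrow> 0" by (rule tendsto_rabs_zero)
    have E: "((\<lambda>h. norm (perf n Q f \<phi> (p(i := p i + h)) - perf n Q f \<phi> (p(i := p i)) - T h) / norm h) \<circ> X)
        = (\<lambda>k. \<bar>integral Q (r k)\<bar>)"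
    proof (rule ext)
      fix k show "((\<lambda>h. norm (perf n Q f \<phi> (p(i := p i + h)) - perf n Q f \<phi> (p(i := p i)) - T h) / norm h) \<circ> X) k
        = \<bar>integral Q (r k)\<bar>"
        unfolding rI o_def by (simp add: abs_divide)
    qed
    show "((\<lambda>h. norm (perf n Q f \<phi> (p(i := p i + h)) - perf n Q f \<phi> (p(i := p i)) - T h) / norm h) \<circ> X) \<longlonglongrightarrow> 0"
      unfolding E by (rule L)
  qed
  have main: "((\<lambda>x. perf n Q f \<phi> (p(i := x))) has_derivative T) (at (p i))"
    unfolding has_derivative_at using blT lim by simp
  show ?thesis using main unfolding T_def .
qed

end
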